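(* Let $\alpha\in(0,1]$, let $\mathbb X$ be a finite-dimensional real Hilbert space, and let $\mathfrak D\subseteq\mathbb X$ be a closed convex set that is $C^{1,\alpha}$-cone reducible at $\hat x\in\mathfrak D$. Let $\hat y\in\mathcal N_{\mathfrak D}(\hat x)$. Then there exist $\hat\rho>0$, $\hat\delta>0$ and $\hat\kappa>0$ such that $$\mathcal N_{\mathfrak D}(x)\cap B(\hat y,\hat\delta)\subseteq\mathcal N_{\mathfrak D}(\hat x)+\hat\kappa\|x-\hat x\|^\alpha B(0,1)\quad\text{for all }x\in B(\hat x,\hat\rho).$$
   Context: $B(x,\eta):=\{u:\|u-x\|\le\eta\}$. For a closed convex set $\mathfrak D$, $\mathcal N_{\mathfrak D}(x):=\{v:\langle v,u-x\rangle\le0\ \forall u\in\mathfrak D\}$ if $x\in\mathfrak D$ (and $\emptyset$ otherwise). Definition ($C^{1,\alpha}$-cone reducibility): for $\alpha\in(0,1]$, a closed set $\mathfrak D\subseteq\mathbb X$ is $C^{1,\alpha}$-cone reducible at $\hat x\in\mathfrak D$ if there exist $\rho>0$, a closed convex pointed cone $K$ in a finite-dimensional Hilbert space $\mathbb Y$, and a mapping $\Xi:\mathbb X\to\mathbb Y$ with $\Xi(\hat x)=0$ that is continuously differentiable on $B(\hat x,\rho)$, such that the derivative $D\Xi(\hat x)$ is surjective, the mapping $x\mapsto D\Xi(x)$ is $\alpha$-Hölder continuous on $B(\hat x,\rho)$, and $\mathfrak D\cap B(\hat x,\rho)=\{x:\Xi(x)\in K\}\cap B(\hat x,\rho)$.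 $\mathfrak D$ is $C^{1,\alpha}$-cone reducible if it is so at every point of $\mathfrak D$. *)

theory Defs
  imports "HOL-Analysis.Analysis"
begin

definition normal_cone :: "'a::real_inner set \<Rightarrow> 'a \<Rightarrow> 'a set" where
  "normal_cone D x = (if x \<in> D then {v. \<forall>u\<in>D. inner v (u - x) \<le> 0} else {})"

definition pointed_cone :: "'b::real_vector set \<Rightarrow> bool" where
  "pointed_cone K \<longleftrightarrow> cone K \<and> convex K \<and> K \<inter> uminus ` K \<subseteq> {0}"

text \<open>C^{1,alpha}-cone reducibility of D at xh, with the cone living in the
  finite-dimensional Hilbert space given by the type 'b.\<close>
definition C1alpha_cone_reducible_at ::
  "real \<Rightarrow> 'a::euclidean_space set \<Rightarrow> 'a \<Rightarrow> 'b::euclidean_space itself \<Rightarrow> bool" where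
  "C1alpha_cone_reducible_at \<alpha> D xh (_::'b itself) \<longleftrightarrow>
     (\<exists>\<rho>>0. \<exists>K::'b set. \<exists>Xi::'a \<Rightarrow> 'b. \<exists>DXi::'a \<Rightarrow> ('a \<Rightarrow>\<^sub>L 'b).
        closed K \<and> pointed_cone K \<and> Xi xh = 0 \<and>
        (\<forall>x\<in>cball xh \<rho>. (Xi has_derivative blinfun_apply (DXi x)) (at x)) \<and>
        continuous_on (cball xh \<rho>) DXi \<and>
        surj (blinfun_apply (DXi xh)) \<and>
        (\<exists>L. \<forall>x\<in>cball xh \<rho>. \<forall>u\<in>cball xh \<rho>. norm (DXi x - DXi u) \<le> L * norm (x - u) powr \<alpha>) \<and>
        D \<inter> cball xh \<rho> = {x. Xi x \<in> K} \<inter> cball xh \<rho>)"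

end

theory Submission
  imports Defs
begin


lemma linz:
  fixes Xi :: "'a::euclidean_space \<Rightarrow> 'b::euclidean_space"
  assumes der: "\<forall>x\<in>cball xh \<rho>. (Xi has_derivative blinfun_apply (DXi x)) (at x)"
    and q: "q \<le> \<rho>" and bd: "\<forall>z\<in>cball xh q. norm (DXi z - DXi xh) \<le> Bd"
    and a: "a \<in> cball xh q" and b: "b \<in> cball xh q"
  shows "norm (Xi b - Xi a - blinfun_apply (DXi xh) (b - a)) \<le> norm (b - a) * Bd"
proof (rule differentiable_bound_linearization[where S="cball xh q" and f' = "\<lambda>x. blinfun_apply (DXi x)"])
  fix t :: real assume "t \<in> {0..1}"
  then have "a + t *\<^sub>R (b - a) = (1 - t) *\<^sub>R a + t *\<^sub>R b" by (simp add: algebra_simps)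
  moreover have "(1 - t) *\<^sub>R a + t *\<^sub>R b \<in> cball xh q"
    using convexD_alt[OF convex_cball a b, of t] \<open>t \<in> {0..1}\<close> by simp
  ultimately show "a + t *\<^sub>R (b - a) \<in> cball xh q" by simp
next
  fix x assume "x \<in> cball xh q"
  then have "x \<in> cball xh \<rho>" using q by (meson mem_cball order_trans)
  then show "(Xi has_derivative blinfun_apply (DXi x)) (at x within cball xh q)"
    using der by (blast intro: has_derivative_at_withinI)
next
  fix x assume "x \<in> cball xh q"
  then show "onorm (blinfun_apply (DXi x) - blinfun_apply (DXi xh)) \<le> Bd"
  proof -
    have e: "blinfun_apply (DXi x) - blinfun_apply (DXi xh) = blinfun_apply (DXi x - DXi xh)"
      by (simp add: minus_blinfun.rep_eq fun_diff_def)
    show ?thesis unfolding e norm_blinfun.rep_eq[symmetric] using bd \<open>x \<in> cball xh q\<close> by blast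
  qed
next
  have "0 \<le> q" using a zero_le_dist[of xh a] unfolding mem_cball by linarith
  then show "xh \<in> cball xh q" by simp
qed


lemma proj:
  fixes D :: "'a::euclidean_space set"
  assumes cvD: "convex D" and xhD: "xh \<in> D" and c0: "0 \<le> c" and hv: "\<forall>u\<in>D. inner v (u - xh) \<le> c * norm (u - xh)"
  shows "\<exists>p. (\<forall>u\<in>D. inner p (u - xh) \<le> 0) \<and> norm (v - p) \<le> c"
proof -
  define N where "N = {n. \<forall>u\<in>D. inner n (u - xh) \<le> 0}"
  have Neq: "N = (\<Inter>u\<in>D. {n. inner (u - xh) n \<le> 0})" unfolding N_def by (auto simp: inner_commute)
  have clN: "closed N" unfolding Neq by (intro closed_INT ballI closed_halfspace_le)
  have cvN: "convex N" unfolding Neq by (intro convex_INT ballI convex_halfspace_le)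
  have N0: "0 \<in> N" unfolding N_def by simp
  define p where "p = closest_point N v"
  have pN: "p \<in> N" unfolding p_def using closest_point_exists(1)[OF clN] N0 by blast
  have pmin: "\<forall>z\<in>N. dist v p \<le> dist v z" unfolding p_def using closest_point_exists(2)[OF clN] N0 by blast
  define w where "w = v - p"
  have key: "inner w (n - p) \<le> 0" if "n \<in> N" for n
    unfolding w_def using any_closest_point_dot[OF cvN clN pN that pmin] .
  have sc: "a *\<^sub>R n \<in> N" if "n \<in> N" "a \<ge> 0" for n a
    using that unfolding N_def by (auto intro: mult_nonneg_nonpos)
  have wp: "inner w p = 0"
  proof -
    have "inner w (0 - p) \<le> 0" using key[OF N0] .
    moreover have "inner w (2 *\<^sub>R p - p) \<le> 0" using key[OF sc[OF pN]] by simp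
    ultimately show ?thesis by (simp add: inner_diff_right) 
  qed
  have wn: "inner w n \<le> 0" if "n \<in> N" for n
    using key[OF that] wp by (simp add: inner_diff_right)
  define C where "C = closure (cone hull ((\<lambda>u. u - xh) ` D))"
  have cvC: "convex C" unfolding C_def
    by (intro convex_closure convex_cone_hull convex_translation_subtract cvD)
  have Csub: "C \<subseteq> {q. inner v q \<le> c * norm q}"
    unfolding C_def
  proof (rule closure_minimal)
    show "cone hull (\<lambda>u. u - xh) ` D \<subseteq> {q. v \<bullet> q \<le> c * norm q}"
    proof
      fix q assume "q \<in> cone hull (\<lambda>u. u - xh) ` D"
      then obtain a u where q: "q = a *\<^sub>R (u - xh)" "a \<ge> 0" "u \<in> D"
        unfolding cone_hull_expl by auto
      have "inner v q = a * inner v (u - xh)" using q by simp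
      also have "\<dots> \<le> a * (c * norm (u - xh))" using hv q by (simp add: mult_left_mono)
      also have "\<dots> = c * norm q" using q by simp
      finally show "q \<in> {q. v \<bullet> q \<le> c * norm q}" by simp
    qed
    show "closed {q. v \<bullet> q \<le> c * norm q}"
      by (rule closed_Collect_le) (auto intro!: continuous_intros)
  qed
  have wC: "w \<in> C"
  proof (rule ccontr)
    assume "w \<notin> C"
    have clC: "closed C" unfolding C_def by simp
    from separating_hyperplane_closed_point[OF cvC clC \<open>w \<notin> C\<close>]
    obtain a b where ab: "inner a w < b" "\<forall>x\<in>C. inner a x > b" by (elim exE conjE)
    have inC: "t *\<^sub>R (u - xh) \<in> C" if "t \<ge> 0" "u \<in> D" for t u
    proof -
      have "t *\<^sub>R (u - xh) \<in> cone hull ((\<lambda>u. u - xh) ` D)" unfolding cone_hull_expl using that by (intro CollectI exI[of _ t] exI[of _ "u - xh"]) auto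
      then show ?thesis unfolding C_def using closure_subset by blast
    qed
    have "0 *\<^sub>R (xh - xh) \<in> C" by (rule inC) (simp_all add: xhD)
    then have "b < inner a (0 *\<^sub>R (xh - xh))" using ab(2) by blast
    then have b0: "b < 0" by simp
    have "- a \<in> N" unfolding N_def
    proof (intro CollectI ballI)
      fix u assume u: "u \<in> D"
      show "inner (- a) (u - xh) \<le> 0"
      proof (rule ccontr)
        assume "\<not> ?thesis"
        then have neg: "inner a (u - xh) < 0" by simp
        define t where "t = b / inner a (u - xh)"
        have "t \<ge> 0" unfolding t_def using neg b0 by (simp add: divide_nonpos_neg)
        then have "t *\<^sub>R (u - xh) \<in> C" using inC u by blast
        then have "inner a (t *\<^sub>R (u - xh)) > b" using ab(2) by blast
        moreover have "inner a (t *\<^sub>R (u - xh)) = t * inner a (u - xh)" by (rule inner_scaleR_right)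
        moreover have "t * inner a (u - xh) = b" unfolding t_def using neg by (simp add: field_simps)
        ultimately show False by linarith
      qed
    qed
    then have "inner w (- a) \<le> 0" using wn by blast
    then show False using ab(1) b0 by (simp add: inner_commute)
  qed
  have "norm w ^ 2 = inner w w" by (simp add: power2_norm_eq_inner)
  also have "\<dots> = inner w (v - p)" by (simp add: w_def)
  also have "\<dots> = inner w v" using wp by (simp add: inner_diff_right)
  also have "\<dots> = inner v w" by (rule inner_commute)
  also have "\<dots> \<le> c * norm w" using Csub wC by blast
  finally have nw2: "norm w ^ 2 \<le> c * norm w" .
  have "norm w \<le> c"
  proof (cases "norm w = 0")
    case False
    then have "norm w * norm w \<le> c * norm w" using nw2 by (simp add: power2_eq_square)
    then show ?thesis using False by (simp add: mult_le_cancel_right)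
  qed (simp add: c0)
  then show ?thesis using pN unfolding N_def w_def by blast
qed


lemma solve:
  fixes Xi :: "'a::euclidean_space \<Rightarrow> 'b::euclidean_space" and A :: "'a \<Rightarrow> 'b" and g :: "'b \<Rightarrow> 'a"
  assumes lg: "linear g" and Ag: "\<And>e. A (g e) = e"
    and gB: "\<And>e. norm (g e) \<le> Bg * norm e" and Bg: "Bg > 0"
    and approx: "\<And>a b. a \<in> cball xh R1 \<Longrightarrow> b \<in> cball xh R1 \<Longrightarrow>
       norm (Xi b - Xi a - A (b - a)) \<le> norm (b - a) / (2*Bg)"
    and w: "dist xh w \<le> R1/2" and y: "norm (y - Xi w) \<le> R1/(4*Bg)"
  shows "\<exists>z. Xi z = y \<and> norm (z - w) \<le> 2*Bg*norm (y - Xi w)"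
proof -
  define R where "R = 2 * norm (y - Xi w)"
  have R0: "0 \<le> R" unfolding R_def by simp
  define F where "F e = e - (Xi (w + g e) - y)" for e
  have gR: "norm (g e) \<le> Bg * R" if "e \<in> cball 0 R" for e
  proof -
    have "norm (g e) \<le> Bg * norm e" by (rule gB)
    also have "\<dots> \<le> Bg * R" using that Bg by (simp add: mult_left_mono)
    finally show ?thesis .
  qed
  have BR: "Bg * R \<le> R1/2"
  proof -
    have "Bg * R = 2 * Bg * norm (y - Xi w)" unfolding R_def by simp
    also have "\<dots> \<le> 2 * Bg * (R1/(4*Bg))" using y Bg by (intro mult_left_mono) auto
    also have "\<dots> = R1/2" using Bg by (simp add: field_simps)
    finally show ?thesis .
  qed
  have inb: "w + g e \<in> cball xh R1" if "e \<in> cball 0 R" for e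
  proof -
    have "dist xh (w + g e) \<le> dist xh w + dist w (w + g e)" by (rule dist_triangle)
    also have "dist w (w + g e) = norm (g e)" by (simp add: dist_norm)
    finally have "dist xh (w + g e) \<le> dist xh w + norm (g e)" .
    then show ?thesis using gR[OF that] BR w by simp
  qed
  have lip: "dist (F e1) (F e2) \<le> (1/2) * dist e1 e2" if e12: "e1 \<in> cball 0 R" "e2 \<in> cball 0 R" for e1 e2
  proof -
    have zd: "(w + g e1) - (w + g e2) = g (e1 - e2)" using linear_diff[OF lg] by simp
    have Az: "A ((w + g e1) - (w + g e2)) = e1 - e2" unfolding zd by (rule Ag)
    have "F e1 - F e2 = - (Xi (w + g e1) - Xi (w + g e2) - A ((w + g e1) - (w + g e2)))"
      unfolding F_def Az by (simp add: algebra_simps)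
    then have "dist (F e1) (F e2) = norm (- (Xi (w + g e1) - Xi (w + g e2) - A ((w + g e1) - (w + g e2))))"
      by (simp only: dist_norm)
    also have "\<dots> = norm (Xi (w + g e1) - Xi (w + g e2) - A ((w + g e1) - (w + g e2)))"
      by (rule norm_minus_cancel)
    also have "\<dots> \<le> norm ((w + g e1) - (w + g e2)) / (2*Bg)"
      by (rule approx[OF inb[OF e12(2)] inb[OF e12(1)]])
    also have "\<dots> = norm (g (e1 - e2)) / (2*Bg)" unfolding zd ..
    also have "\<dots> \<le> (Bg * norm (e1 - e2)) / (2*Bg)" using Bg gB by (intro divide_right_mono) auto
    also have "\<dots> = (1/2) * dist e1 e2" using Bg by (simp add: dist_norm)
    finally show ?thesis .
  qed
  have F0: "F 0 = y - Xi w" unfolding F_def using linear_0[OF lg] by simp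
  have maps: "F ` cball 0 R \<subseteq> cball 0 R"
  proof
    fix f assume "f \<in> F ` cball 0 R"
    then obtain e where e: "e \<in> cball 0 R" "f = F e" by blast
    have c0: "(0::'b) \<in> cball 0 R" using R0 by simp
    have "norm (F e) \<le> dist (F e) (F 0) + norm (F 0)"
      using norm_triangle_sub[of "F e" "F 0"] by (simp add: dist_norm add.commute)
    also have "\<dots> \<le> (1/2) * dist e 0 + norm (y - Xi w)" using lip[OF e(1) c0] F0 by simp
    also have "\<dots> \<le> (1/2) * R + norm (y - Xi w)" using e(1) by (simp add: dist_norm)
    also have "\<dots> = R" unfolding R_def by simp
    finally show "f \<in> cball 0 R" using e by simp
  qed
  have "\<exists>!e\<in>cball 0 R. F e = e"
    by (rule Banach_fix[OF _ _ _ _ maps lip]) (use R0 in \<open>auto simp: complete_eq_closed\<close>)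
  then obtain e where e: "e \<in> cball 0 R" "F e = e" by blast
  then have "Xi (w + g e) = y" unfolding F_def by (simp add: algebra_simps)
  moreover have "norm ((w + g e) - w) \<le> 2*Bg*norm (y - Xi w)"
    using gR[OF e(1)] unfolding R_def by simp
  ultimately show ?thesis by blast
qed
theorem lemma4p2:
  fixes \<alpha> :: real and D :: "'a::euclidean_space set" and xh yh :: 'a
  assumes "0 < \<alpha>" and "\<alpha> \<le> 1"
    and "closed D" and "convex D" and "xh \<in> D"
    and "C1alpha_cone_reducible_at \<alpha> D xh TYPE('b::euclidean_space)"
    and "yh \<in> normal_cone D xh"
  shows "\<exists>\<rho>>0. \<exists>\<delta>>0. \<exists>\<kappa>>0. \<forall>x\<in>cball xh \<rho>.
           normal_cone D x \<inter> cball yh \<delta> \<subseteq>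
             {v + w | v w. v \<in> normal_cone D xh \<and> w \<in> cball 0 (\<kappa> * norm (x - xh) powr \<alpha>)}"
proof -
  note al0 = assms(1) and al1 = assms(2) and cvD = assms(4) and xhD = assms(5)
  obtain \<rho> and K :: "'b set" and Xi :: "'a \<Rightarrow> 'b" and DXi :: "'a \<Rightarrow> ('a \<Rightarrow>\<^sub>L 'b)" and L where
    \<rho>: "\<rho> > 0" and clK: "closed K" and pK: "pointed_cone K" and Xi0: "Xi xh = 0"
    and der: "\<forall>x\<in>cball xh \<rho>. (Xi has_derivative blinfun_apply (DXi x)) (at x)"
    and cont: "continuous_on (cball xh \<rho>) DXi"
    and sur: "surj (blinfun_apply (DXi xh))"
    and hol: "\<forall>x\<in>cball xh \<rho>. \<forall>u\<in>cball xh \<rho>. norm (DXi x - DXi u) \<le> L * norm (x - u) powr \<alpha>"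
    and Deq: "D \<inter> cball xh \<rho> = {x. Xi x \<in> K} \<inter> cball xh \<rho>"
    using assms(6) unfolding C1alpha_cone_reducible_at_def by blast
  have coneK: "cone K" and cvK: "convex K" using pK unfolding pointed_cone_def by auto
  define A where "A = blinfun_apply (DXi xh)"
  have linA: "linear A" unfolding A_def
    by (rule bounded_linear.linear[OF blinfun.bounded_linear_right])
  obtain g where lg: "linear g" and Ag0: "A \<circ> g = id"
    using real_vector.linear_surjective_right_inverse[OF linA sur[folded A_def]] by blast
  have Ag: "A (g e) = e" for e using Ag0 by (simp add: fun_eq_iff)
  obtain Bg where Bg: "Bg > 0" and gB: "\<And>e. norm (g e) \<le> Bg * norm e"
    using linear_bounded_pos[OF lg] by blast
  define L1 where "L1 = max L 0"
  have L1: "L1 \<ge> 0" "L \<le> L1" unfolding L1_def by auto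
  define \<epsilon> where "\<epsilon> = 1 / (2 * Bg)"
  have \<epsilon>0: "\<epsilon> > 0" unfolding \<epsilon>_def using Bg by simp
  have xhin: "xh \<in> cball xh \<rho>" using \<rho> by simp
  obtain d where d: "d > 0" and dP: "\<forall>z\<in>cball xh \<rho>. dist z xh < d \<longrightarrow> dist (DXi z) (DXi xh) < \<epsilon>"
    using cont xhin \<epsilon>0 unfolding continuous_on_iff by blast
  define R1 where "R1 = min \<rho> (d/2)"
  have R1: "R1 > 0" "R1 \<le> \<rho>" "R1 < d" unfolding R1_def using \<rho> d by auto
  have epsB: "norm (DXi z - DXi xh) \<le> \<epsilon>" if "z \<in> cball xh R1" for z
  proof -
    have "z \<in> cball xh \<rho>" "dist z xh < d" using that R1 by (auto simp: dist_commute)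
    then show ?thesis using dP by (auto simp: dist_norm)
  qed
  have approx: "norm (Xi b - Xi a - A (b - a)) \<le> norm (b - a) / (2*Bg)"
    if "a \<in> cball xh R1" "b \<in> cball xh R1" for a b
  proof -
    have "\<forall>z\<in>cball xh R1. norm (DXi z - DXi xh) \<le> \<epsilon>" using epsB by blast
    from linz[OF der R1(2) this that] show ?thesis unfolding A_def \<epsilon>_def by simp
  qed
  define \<kappa> where "\<kappa> = 8 * Bg * L1 * (norm yh + 1) + 1"
  have "0 \<le> 8 * Bg * L1 * (norm yh + 1)" using Bg L1 by simp
  then have \<kappa>0: "\<kappa> > 0" unfolding \<kappa>_def by linarith
  have main: "\<forall>x\<in>cball xh (R1/4). normal_cone D x \<inter> cball yh 1 \<subseteq>
             {v + w | v w. v \<in> normal_cone D xh \<and> w \<in> cball 0 (\<kappa> * norm (x - xh) powr \<alpha>)}"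
  proof (intro ballI subsetI)
    fix x v assume x: "x \<in> cball xh (R1/4)" and v: "v \<in> normal_cone D x \<inter> cball yh 1"
    have xD: "x \<in> D" using v unfolding normal_cone_def by (auto split: if_splits)
    have hv: "\<forall>u\<in>D. inner v (u - x) \<le> 0" using v xD unfolding normal_cone_def by auto
    have nv: "norm v \<le> norm yh + 1"
    proof -
      have "dist yh v \<le> 1" using v by simp
      then show ?thesis using norm_triangle_sub[of v yh] by (simp add: dist_norm norm_minus_commute)
    qed
    show "v \<in> {v + w | v w. v \<in> normal_cone D xh \<and> w \<in> cball 0 (\<kappa> * norm (x - xh) powr \<alpha>)}"
    proof (cases "x = xh")
      case True
      then have "v \<in> normal_cone D xh" using v by simp
      then show ?thesis using True by (intro CollectI exI[of _ v] exI[of _ 0]) simp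
    next
      case False
      define r where "r = norm (x - xh)"
      have r0: "r > 0" using False unfolding r_def by simp
      have rR: "r \<le> R1/4" using x unfolding r_def by (simp add: dist_norm norm_minus_commute)
      define c where "c = 8 * Bg * L1 * (norm yh + 1) * r powr \<alpha>"
      have c0: "c \<ge> 0" unfolding c_def using Bg L1 by simp
      have claim: "inner v (u - xh) \<le> c * norm (u - xh)" if uD: "u \<in> D" for u
      proof (cases "u = xh")
        case True then show ?thesis by simp
      next
        case False
        define t where "t = u - xh"
        have nt: "norm t > 0" using False unfolding t_def by simp
        define s where "s = min 1 (r / norm t)"
        have s0: "s > 0" "s \<le> 1" unfolding s_def using r0 nt by auto
        have snt: "s * norm t \<le> r"
        proof (cases "1 \<le> r / norm t")
          case True
          then have "norm t \<le> r" using nt by (simp add: field_simps)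
          then show ?thesis using True unfolding s_def by simp
        next
          case False
          then show ?thesis unfolding s_def using nt by simp
        qed
        define p where "p = s *\<^sub>R t"
        have np: "norm p = s * norm t" unfolding p_def using s0 by simp
        have npr: "norm p \<le> r" using np snt by simp
        have aeq: "xh + p = (1 - s) *\<^sub>R xh + s *\<^sub>R u" unfolding p_def t_def by (simp add: algebra_simps)
        have aD: "xh + p \<in> D" unfolding aeq using convexD[OF cvD xhD uD, of "1 - s" s] s0 by simp
        have R1r: "2 * r \<le> R1/2" using rR by simp
        have r2R: "2 * r \<le> \<rho>" using R1r R1 by simp
        have nxx: "norm (xh - x) = r" unfolding r_def by (rule norm_minus_commute)
        have hx2: "x \<in> cball xh (2*r)" using nxx r0 by (simp add: dist_norm)
        have "norm ((xh - x) - p) \<le> norm (xh - x) + norm p" by (rule norm_triangle_ineq4)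
        moreover have "dist xh (x + p) = norm ((xh - x) - p)" by (simp add: dist_norm algebra_simps)
        ultimately have "dist xh (x + p) \<le> r + norm p" using nxx by simp
        then have hxp2: "x + p \<in> cball xh (2*r)" using npr by simp
        have hxh2: "xh \<in> cball xh (2*r)" using r0 by simp
        have hxhp2: "xh + p \<in> cball xh (2*r)" using npr r0 by (simp add: dist_norm)
        have sub2: "cball xh (2*r) \<subseteq> cball xh R1" using R1r R1 by (intro subset_cball) simp
        have sub1: "cball xh R1 \<subseteq> cball xh \<rho>" using R1 by (intro subset_cball) simp
        define H where "H = L1 * (2 * r powr \<alpha>)"
        have H0: "H \<ge> 0" unfolding H_def using L1 by simp
        have two: "(2 * r) powr \<alpha> \<le> 2 * r powr \<alpha>"
        proof -
          have "(2 * r) powr \<alpha> = 2 powr \<alpha> * r powr \<alpha>" using r0 by (simp add: powr_mult)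
          also have "2 powr \<alpha> \<le> 2 powr (1::real)" using al1 by (intro powr_mono) auto
          then have "2 powr \<alpha> * r powr \<alpha> \<le> 2 * r powr \<alpha>" by (intro mult_right_mono) auto
          finally show ?thesis .
        qed
        have hb: "\<forall>z\<in>cball xh (2*r). norm (DXi z - DXi xh) \<le> H"
        proof
          fix z assume z: "z \<in> cball xh (2*r)"
          then have zr: "z \<in> cball xh \<rho>" using sub1 sub2 by blast
          have "norm (DXi z - DXi xh) \<le> L * norm (z - xh) powr \<alpha>" using hol zr xhin by blast
          also have "\<dots> \<le> L1 * norm (z - xh) powr \<alpha>" using L1 by (intro mult_right_mono) auto
          also have "norm (z - xh) powr \<alpha> \<le> (2 * r) powr \<alpha>"
            using z al0 by (intro powr_mono2) (auto simp: dist_norm norm_minus_commute)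
          then have "L1 * norm (z - xh) powr \<alpha> \<le> L1 * (2 * r) powr \<alpha>" using L1 by (intro mult_left_mono) auto
          also have "\<dots> \<le> H" unfolding H_def using two L1 by (intro mult_left_mono) auto
          finally show "norm (DXi z - DXi xh) \<le> H" .
        qed
        have e1: "norm (Xi (x + p) - Xi x - A p) \<le> norm p * H"
          using linz[OF der r2R hb hx2 hxp2] unfolding A_def by simp
        have e2: "norm (Xi (xh + p) - Xi xh - A p) \<le> norm p * H"
          using linz[OF der r2R hb hxh2 hxhp2] unfolding A_def by simp
        have f1: "norm (Xi (x + p) - Xi x - A p) \<le> norm p / (2*Bg)"
          using approx[OF subsetD[OF sub2 hx2] subsetD[OF sub2 hxp2]] by simp
        have f2: "norm (Xi (xh + p) - Xi xh - A p) \<le> norm p / (2*Bg)"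
          using approx[OF subsetD[OF sub2 hxh2] subsetD[OF sub2 hxhp2]] by simp
        define y where "y = Xi x + Xi (xh + p)"
        have yeq: "y - Xi (x + p) = (Xi (xh + p) - Xi xh - A p) - (Xi (x + p) - Xi x - A p)"
          unfolding y_def using Xi0 by (simp add: algebra_simps)
        have ytri: "norm (y - Xi (x + p)) \<le> norm (Xi (xh + p) - Xi xh - A p) + norm (Xi (x + p) - Xi x - A p)"
          unfolding yeq by (rule norm_triangle_ineq4)
        have ny: "norm (y - Xi (x + p)) \<le> 2 * (norm p * H)" using ytri e1 e2 by simp
        have "norm (y - Xi (x + p)) \<le> norm p / Bg" using ytri f1 f2 by simp
        also have "\<dots> \<le> r / Bg" using npr Bg by (simp add: divide_right_mono)
        also have "\<dots> \<le> (R1/4) / Bg" using rR Bg by (intro divide_right_mono) auto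
        finally have feas: "norm (y - Xi (x + p)) \<le> R1 / (4 * Bg)" by simp
        have wpt: "dist xh (x + p) \<le> R1/2" using hxp2 R1r by simp
        obtain z where z: "Xi z = y" "norm (z - (x + p)) \<le> 2*Bg*norm (y - Xi (x + p))"
          using solve[OF lg Ag gB Bg approx wpt feas] by blast
        have xK: "Xi x \<in> K"
        proof -
          have "x \<in> cball xh \<rho>" using hx2 sub1 sub2 by blast
          then show ?thesis using Deq xD by blast
        qed
        have aK: "Xi (xh + p) \<in> K"
        proof -
          have "xh + p \<in> cball xh \<rho>" using hxhp2 sub1 sub2 by blast
          then show ?thesis using Deq aD by blast
        qed
        have "(1/2) *\<^sub>R Xi x + (1/2) *\<^sub>R Xi (xh + p) \<in> K"
          using convexD[OF cvK xK aK, of "1/2" "1/2"] by simp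
        then have "(2::real) *\<^sub>R ((1/2) *\<^sub>R Xi x + (1/2) *\<^sub>R Xi (xh + p)) \<in> K"
          using coneK unfolding cone_def by simp
        then have yK: "y \<in> K" unfolding y_def by (simp add: scaleR_right_distrib)
        have "dist xh z \<le> dist xh (x + p) + dist (x + p) z" by (rule dist_triangle)
        also have "dist (x + p) z = norm (z - (x + p))" by (simp add: dist_norm norm_minus_commute)
        also have "\<dots> \<le> 2*Bg*(R1 / (4 * Bg))" using z(2) feas Bg
          by (meson order_trans mult_left_mono less_imp_le mult_pos_pos zero_less_numeral)
        finally have "dist xh z \<le> R1/2 + 2*Bg*(R1 / (4 * Bg))" using wpt by linarith
        also have "\<dots> = R1" using Bg by (simp add: field_simps)
        finally have "z \<in> cball xh \<rho>" using R1 by simp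
        then have zD: "z \<in> D" using Deq z(1) yK by blast
        have i0: "inner v (z - x) \<le> 0" using hv zD by blast
        have "inner v (z - x) = inner v (p + (z - (x + p)))" by simp
        also have "\<dots> = inner v p + inner v (z - (x + p))" by (rule inner_add_right)
        finally have "inner v (z - x) = inner v p + inner v (z - (x + p))" .
        then have "inner v p \<le> - inner v (z - (x + p))" using i0 by linarith
        also have "\<dots> = inner v (-(z - (x + p)))" by (rule inner_minus_right[symmetric])
        also have "\<dots> \<le> norm v * norm (-(z - (x + p)))" by (rule norm_cauchy_schwarz)
        also have "\<dots> = norm v * norm (z - (x + p))" by (simp only: norm_minus_cancel)
        also have "\<dots> \<le> (norm yh + 1) * (2*Bg*(2 * (norm p * H)))"
        proof (rule mult_mono)
          show "norm v \<le> norm yh + 1" by (rule nv)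
          show "norm (z - (x + p)) \<le> 2*Bg*(2 * (norm p * H))"
            using z(2) ny Bg by (meson order_trans mult_left_mono less_imp_le mult_pos_pos zero_less_numeral)
        qed auto
        also have "\<dots> = c * norm p" unfolding c_def H_def by (simp add: algebra_simps)
        finally have "inner v p \<le> c * norm p" .
        then have "s * inner v t \<le> s * (c * norm t)" unfolding p_def np[unfolded p_def] by (simp add: algebra_simps)
        then have "inner v t \<le> c * norm t" using s0 by simp
        then show ?thesis unfolding t_def .
      qed
      obtain p where p: "\<forall>u\<in>D. inner p (u - xh) \<le> 0" "norm (v - p) \<le> c"
        using proj[OF cvD xhD c0] claim by blast
      have pN: "p \<in> normal_cone D xh" using p(1) xhD unfolding normal_cone_def by simp
      have "c \<le> \<kappa> * r powr \<alpha>" unfolding c_def \<kappa>_def by (simp add: algebra_simps)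
      then have "v - p \<in> cball 0 (\<kappa> * norm (x - xh) powr \<alpha>)" using p(2) unfolding r_def by simp
      then show ?thesis using pN by (intro CollectI exI[of _ p] exI[of _ "v - p"]) simp
    qed
  qed
  have "R1/4 > 0" "(1::real) > 0" using R1 by auto
  then show ?thesis using main \<kappa>0 by blast
qed

end
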